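(* Let $\sigma$ be a super filling of $\mathrm{dg}(\lambda)$ (order $<_2$) that is not $\Phi$-trivial, with distinguished label $a$, and let $r$ be the row of its distinguished cell. Let $u$ be any cell in row $r$ with $|\sigma(u)|=a$. Then $\mathrm{maj}(\Phi_u(\sigma))=\mathrm{maj}(\sigma)+1$ if $\sigma(u)=a$, and $\mathrm{maj}(\Phi_u(\sigma))=\mathrm{maj}(\sigma)-1$ if $\sigma(u)=\bar a$.
   Context: Let $\lambda=(\lambda_1\ge\dots\ge\lambda_k>0)$ be a partition; $\mathrm{dg}(\lambda)=\{(r,i):1\le i\le k,1\le r\le\lambda_i\}$, $(r,i)$ being row $r$ from the bottom and column $i$ from the left (columns bottom-justified of heights $\lambda_i$); $\mathrm{leg}((r,i))=\lambda_i-r$. $\mathcal A=\{1,\bar1,2,\bar2,\dots\}$ consists of positive letters $i$ and negative letters $\bar i$, $|i|=|\bar i|=i$, totally ordered by $<_2$: $0<1<2<3<\cdots<\bar3<\bar2<\bar1$. $I(a,b)=1$ if $a>b$ or $a=b$ is negative, and $I(a,b)=0$ if $a<b$ or $a=b$ is positive. A super filling is $\sigma:\mathrm{dg}(\lambda)\to\mathcal A$; a cell $u=(r,i)$, $r>1$, is a descent if $I(\sigma(u),\sigma((r-1,i)))=1$, and $\mathrm{maj}(\sigma)=\sum_{\text{descents }u}(\mathrm{leg}(u)+1)$. The reading order goes through rows top to bottom, each row right to left. $\Phi_u(\sigma)$ changes the sign ($i\leftrightarrow\bar i$) of the entry in cell $u$. The distinguished label of $\sigma$ is the smallest positive integer $a$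 such that some cell $(r,j)$ has $|\sigma((r,j))|=a$ and $r>a$; if no such $a$ exists, $\sigma$ is $\Phi$-trivial. If $a$ exists, the distinguished cell is the first cell in reading order whose entry has absolute value $a$. *)

theory Defs
  imports Main
begin

text \<open>Letters: Pos i is the positive letter i, Neg i is the negative letter bar i (i \<ge> 1).\<close>
datatype letter = Pos nat | Neg nat

fun absl :: "letter \<Rightarrow> nat" where
  "absl (Pos i) = i" | "absl (Neg i) = i"

fun is_neg :: "letter \<Rightarrow> bool" where
  "is_neg (Pos i) = False" | "is_neg (Neg i) = True"

fun flip :: "letter \<Rightarrow> letter" where
  "flip (Pos i) = Neg i" | "flip (Neg i) = Pos i"

fun lt2 :: "letter \<Rightarrow> letter \<Rightarrow> bool" where
  "lt2 (Pos i) (Pos j) = (i < j)"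
| "lt2 (Pos i) (Neg j) = True"
| "lt2 (Neg i) (Pos j) = False"
| "lt2 (Neg i) (Neg j) = (j < i)"

definition Iind :: "letter \<Rightarrow> letter \<Rightarrow> bool" where
  "Iind a b \<longleftrightarrow> lt2 b a \<or> (a = b \<and> is_neg a)"

definition is_partition :: "nat list \<Rightarrow> bool" where
  "is_partition lam \<longleftrightarrow> sorted_wrt (\<ge>) lam \<and> (\<forall>x\<in>set lam. x > 0)"

text \<open>Cells are pairs (r, i): row r from the bottom, column i from the left (both 1-based);
  column i has height lambda_i = lam ! (i - 1).\<close>
definition dg :: "nat list \<Rightarrow> (nat \<times> nat) set" where
  "dg lam = {(r, i). 1 \<le> i \<and> i \<le> length lam \<and> 1 \<le> r \<and> r \<le> lam ! (i - 1)}"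

definition leg :: "nat list \<Rightarrow> nat \<times> nat \<Rightarrow> nat" where
  "leg lam u = lam ! (snd u - 1) - fst u"

definition super_filling :: "nat list \<Rightarrow> (nat \<times> nat \<Rightarrow> letter) \<Rightarrow> bool" where
  "super_filling lam \<sigma> \<longleftrightarrow> (\<forall>u\<in>dg lam. absl (\<sigma> u) \<ge> 1)"

definition is_descent :: "nat list \<Rightarrow> (nat \<times> nat \<Rightarrow> letter) \<Rightarrow> nat \<times> nat \<Rightarrow> bool" where
  "is_descent lam \<sigma> u \<longleftrightarrow> u \<in> dg lam \<and> fst u > 1 \<and> Iind (\<sigma> u) (\<sigma> (fst u - 1, snd u))"

definition maj :: "nat list \<Rightarrow> (nat \<times> nat \<Rightarrow> letter) \<Rightarrow> nat" where
  "maj lam \<sigma> = (\<Sum>u\<in>{u\<in>dg lam. is_descent lam \<sigma> u}. leg lam u + 1)"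

definition Phi :: "nat \<times> nat \<Rightarrow> (nat \<times> nat \<Rightarrow> letter) \<Rightarrow> (nat \<times> nat \<Rightarrow> letter)" where
  "Phi u \<sigma> = \<sigma>(u := flip (\<sigma> u))"

definition reading_before :: "nat \<times> nat \<Rightarrow> nat \<times> nat \<Rightarrow> bool" where
  "reading_before c d \<longleftrightarrow> fst c > fst d \<or> (fst c = fst d \<and> snd c > snd d)"

definition label_candidate :: "nat list \<Rightarrow> (nat \<times> nat \<Rightarrow> letter) \<Rightarrow> nat \<Rightarrow> bool" where
  "label_candidate lam \<sigma> a \<longleftrightarrow> a > 0 \<and> (\<exists>c\<in>dg lam. absl (\<sigma> c) = a \<and> fst c > a)"

definition phi_trivial :: "nat list \<Rightarrow> (nat \<times> nat \<Rightarrow> letter) \<Rightarrow> bool" where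
  "phi_trivial lam \<sigma> \<longleftrightarrow> \<not> (\<exists>a. label_candidate lam \<sigma> a)"

definition dist_label :: "nat list \<Rightarrow> (nat \<times> nat \<Rightarrow> letter) \<Rightarrow> nat" where
  "dist_label lam \<sigma> = (LEAST a. label_candidate lam \<sigma> a)"

definition dist_cell :: "nat list \<Rightarrow> (nat \<times> nat \<Rightarrow> letter) \<Rightarrow> nat \<times> nat" where
  "dist_cell lam \<sigma> = (THE c. c \<in> dg lam \<and> absl (\<sigma> c) = dist_label lam \<sigma> \<and>
      (\<forall>d\<in>dg lam. absl (\<sigma> d) = dist_label lam \<sigma> \<longrightarrow> d \<noteq> c \<longrightarrow> reading_before c d))"

end

theory Submission
  imports Defs "HOL-Library.Product_Lexorder"
begin

lemma rb_iff: "reading_before c d \<longleftrightarrow> d < c"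
  by (auto simp: reading_before_def less_prod_def')

lemma finite_dg: "finite (dg lam)"
proof -
  have "dg lam \<subseteq> {..sum_list lam} \<times> {..length lam}"
  proof
    fix x assume "x \<in> dg lam"
    then obtain r i where x: "x = (r,i)" "1 \<le> i" "i \<le> length lam" "r \<le> lam ! (i - 1)"
      by (auto simp: dg_def)
    have "lam ! (i - 1) \<le> sum_list lam" using x by (intro elem_le_sum_list) auto
    then show "x \<in> {..sum_list lam} \<times> {..length lam}" using x by auto
  qed
  then show ?thesis by (rule finite_subset) auto
qed

lemma dist_cell_prop:
  assumes "\<exists>c\<in>dg lam. absl (\<sigma> c) = dist_label lam \<sigma>"
  shows "dist_cell lam \<sigma> \<in> dg lam \<and> absl (\<sigma> (dist_cell lam \<sigma>)) = dist_label lam \<sigma> \<and>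
      (\<forall>d\<in>dg lam. absl (\<sigma> d) = dist_label lam \<sigma> \<longrightarrow> d \<noteq> dist_cell lam \<sigma> \<longrightarrow> d < dist_cell lam \<sigma>)"
proof -
  define A where "A = {d\<in>dg lam. absl (\<sigma> d) = dist_label lam \<sigma>}"
  have fA: "finite A" unfolding A_def using finite_dg by auto
  have nA: "A \<noteq> {}" using assms unfolding A_def by auto
  let ?P = "\<lambda>c. c \<in> dg lam \<and> absl (\<sigma> c) = dist_label lam \<sigma> \<and>
      (\<forall>d\<in>dg lam. absl (\<sigma> d) = dist_label lam \<sigma> \<longrightarrow> d \<noteq> c \<longrightarrow> reading_before c d)"
  have "?P (Max A)"
  proof -
    have "Max A \<in> A" using fA nA by simp
    moreover have "\<forall>d\<in>A. d \<le> Max A" using fA by simp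
    ultimately show ?thesis unfolding A_def rb_iff by (auto simp: order.order_iff_strict)
  qed
  moreover have "\<And>c. ?P c \<Longrightarrow> c = Max A"
  proof -
    fix c assume Pc: "?P c"
    show "c = Max A"
    proof (rule ccontr)
      assume "c \<noteq> Max A"
      with Pc \<open>?P (Max A)\<close> have "Max A < c" "c < Max A" unfolding rb_iff by auto
      then show False by simp
    qed
  qed
  ultimately have "?P (dist_cell lam \<sigma>)" unfolding dist_cell_def
    by (rule theI)
  then show ?thesis unfolding rb_iff by blast
qed

lemma I1: "absl y \<ge> a \<Longrightarrow> \<not> Iind (Pos a) y"
  by (cases y) (auto simp: Iind_def)
lemma I2: "absl y \<ge> a \<Longrightarrow> Iind (Neg a) y"
  by (cases y) (auto simp: Iind_def)
lemma I3: "absl x > a \<Longrightarrow> Iind x (Pos a)"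
  by (cases x) (auto simp: Iind_def)
lemma I4: "absl x > a \<Longrightarrow> \<not> Iind x (Neg a)"
  by (cases x) (auto simp: Iind_def)

theorem mainTheorem9:
  fixes lam :: "nat list" and \<sigma> :: "nat \<times> nat \<Rightarrow> letter" and u :: "nat \<times> nat"
  assumes "is_partition lam"
    and "super_filling lam \<sigma>"
    and "\<not> phi_trivial lam \<sigma>"
    and "u \<in> dg lam"
    and "fst u = fst (dist_cell lam \<sigma>)"
    and "absl (\<sigma> u) = dist_label lam \<sigma>"
  shows "(\<sigma> u = Pos (dist_label lam \<sigma>) \<longrightarrow>
            int (maj lam (Phi u \<sigma>)) = int (maj lam \<sigma>) + 1)
       \<and> (\<sigma> u = Neg (dist_label lam \<sigma>) \<longrightarrow>
            int (maj lam (Phi u \<sigma>)) = int (maj lam \<sigma>) - 1)"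
proof -
  define a where "a = dist_label lam \<sigma>"
  define c where "c = dist_cell lam \<sigma>"
  obtain r i where u: "u = (r, i)" by (cases u)
  have ex: "\<exists>b. label_candidate lam \<sigma> b" using assms(3) by (simp add: phi_trivial_def)
  have la: "label_candidate lam \<sigma> a" unfolding a_def dist_label_def using ex by (metis LeastI_ex)
  have minl: "\<And>b. b < a \<Longrightarrow> \<not> label_candidate lam \<sigma> b"
    unfolding a_def dist_label_def by (rule not_less_Least)
  from la obtain c1 where c1: "c1 \<in> dg lam" "absl (\<sigma> c1) = a" "fst c1 > a" "a > 0"
    by (auto simp: label_candidate_def)
  have cp: "c \<in> dg lam \<and> absl (\<sigma> c) = a \<and>
      (\<forall>d\<in>dg lam. absl (\<sigma> d) = a \<longrightarrow> d \<noteq> c \<longrightarrow> d < c)"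
    unfolding a_def c_def using dist_cell_prop[of lam \<sigma>] c1 a_def by blast
  have top: "\<And>d. d \<in> dg lam \<Longrightarrow> absl (\<sigma> d) = a \<Longrightarrow> fst d \<le> r"
  proof -
    fix d assume "d \<in> dg lam" "absl (\<sigma> d) = a"
    with cp have "d = c \<or> d < c" by blast
    then have "fst d \<le> fst c" by (auto simp: less_prod_def')
    then show "fst d \<le> r" using assms(5) u c_def by simp
  qed
  have ra: "r > a" using top[OF c1(1) c1(2)] c1(3) by simp
  have udg: "1 \<le> i" "i \<le> length lam" "1 \<le> r" "r \<le> lam ! (i - 1)"
    using assms(4) u by (auto simp: dg_def)
  have sf: "\<And>d. d \<in> dg lam \<Longrightarrow> absl (\<sigma> d) \<ge> 1" using assms(2) by (auto simp: super_filling_def)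
  have r1: "r > 1" using ra c1(4) by simp
  define y where "y = \<sigma> (r - 1, i)"
  have ydg: "(r - 1, i) \<in> dg lam" using udg r1 by (auto simp: dg_def)
  have yge: "absl y \<ge> a"
  proof (rule ccontr)
    assume "\<not> a \<le> absl y"
    then have "label_candidate lam \<sigma> (absl y)" unfolding label_candidate_def
      using ydg sf[OF ydg] ra y_def by (intro conjI bexI[of _ "(r - 1, i)"]) auto
    with minl \<open>\<not> a \<le> absl y\<close> show False by simp
  qed
  define w where "w = (r + 1, i)"
  define x where "x = \<sigma> w"
  have xgt: "w \<in> dg lam \<Longrightarrow> absl x > a"
  proof -
    assume wdg: "w \<in> dg lam"
    have "absl x \<noteq> a" using top[OF wdg] x_def w_def by auto
    moreover have "\<not> absl x < a"
    proof
      assume "absl x < a"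
      then have "label_candidate lam \<sigma> (absl x)" unfolding label_candidate_def
        using wdg sf[OF wdg] ra x_def w_def by (intro conjI bexI[of _ w]) auto
      with minl \<open>absl x < a\<close> show False by simp
    qed
    ultimately show ?thesis by simp
  qed
  define \<sigma>' where "\<sigma>' = Phi u \<sigma>"
  have same: "\<And>v. v \<noteq> u \<Longrightarrow> v \<noteq> w \<Longrightarrow> is_descent lam \<sigma>' v = is_descent lam \<sigma> v"
  proof -
    fix v assume "v \<noteq> u" "v \<noteq> w"
    then have "fst v > 1 \<Longrightarrow> (fst v - 1, snd v) \<noteq> u" using u w_def by (cases v) auto
    then show "is_descent lam \<sigma>' v = is_descent lam \<sigma> v"
      using \<open>v \<noteq> u\<close> by (auto simp: is_descent_def \<sigma>'_def Phi_def)
  qed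
  define S where "S = {v\<in>dg lam. is_descent lam \<sigma> v} - {u, w}"
  have S': "S = {v\<in>dg lam. is_descent lam \<sigma>' v} - {u, w}" unfolding S_def using same by auto
  have fS: "finite S" unfolding S_def using finite_dg by auto
  have uS: "u \<notin> S" "w \<notin> S" unfolding S_def by auto
  have uw: "u \<noteq> w" using u w_def by auto
  define W where "W = (if w \<in> dg lam then {w} else {})"
  have legs: "leg lam u = (if w \<in> dg lam then leg lam w + 1 else 0)"
    using udg u w_def by (auto simp: leg_def dg_def)
  have sumW: "(\<Sum>v\<in>S \<union> W. leg lam v + 1) = (\<Sum>v\<in>S. leg lam v + 1) + (if w \<in> dg lam then leg lam w + 1 else 0)"
    using fS uS by (auto simp: W_def)
  have sumU: "(\<Sum>v\<in>S \<union> {u}. leg lam v + 1) = (\<Sum>v\<in>S. leg lam v + 1) + leg lam u + 1"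
    using fS uS by simp
  have \<sigma>'u: "\<sigma>' u = flip (\<sigma> u)" "\<sigma>' (r - 1, i) = y" "\<sigma>' w = x"
    using u uw r1 by (auto simp: \<sigma>'_def Phi_def y_def x_def w_def)
  have \<sigma>'w2: "\<sigma>' (fst w - 1, snd w) = flip (\<sigma> u)" "\<sigma> (fst w - 1, snd w) = \<sigma> u"
    using u by (auto simp: \<sigma>'_def Phi_def w_def)
  show ?thesis
  proof (intro conjI impI)
    assume su: "\<sigma> u = Pos (dist_label lam \<sigma>)"
    then have su': "\<sigma> u = Pos a" by (simp add: a_def)
    have d1: "\<not> is_descent lam \<sigma> u" "is_descent lam \<sigma>' u"
      using su' \<sigma>'u I1[OF yge] I2[OF yge] assms(4) r1 unfolding y_def
      by (simp_all add: is_descent_def u)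
    have d2: "w \<in> dg lam \<Longrightarrow> is_descent lam \<sigma> w \<and> \<not> is_descent lam \<sigma>' w"
      using su' r1 \<sigma>'u(3) \<sigma>'w2 I3[OF xgt] I4[OF xgt] unfolding x_def
      by (simp add: is_descent_def w_def)
    have D: "{v\<in>dg lam. is_descent lam \<sigma> v} = S \<union> W"
      using d1 d2 unfolding S_def W_def by (auto simp: is_descent_def)
    have D': "{v\<in>dg lam. is_descent lam \<sigma>' v} = S \<union> {u}"
      using d1 d2 assms(4) unfolding S' W_def by (auto simp: is_descent_def)
    show "int (maj lam (Phi u \<sigma>)) = int (maj lam \<sigma>) + 1"
      unfolding maj_def \<sigma>'_def[symmetric] D D' sumW sumU legs by auto
  next
    assume su: "\<sigma> u = Neg (dist_label lam \<sigma>)"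
    then have su': "\<sigma> u = Neg a" by (simp add: a_def)
    have d1: "is_descent lam \<sigma> u" "\<not> is_descent lam \<sigma>' u"
      using su' \<sigma>'u I1[OF yge] I2[OF yge] assms(4) r1 unfolding y_def
      by (simp_all add: is_descent_def u)
    have d2: "w \<in> dg lam \<Longrightarrow> \<not> is_descent lam \<sigma> w \<and> is_descent lam \<sigma>' w"
      using su' r1 \<sigma>'u(3) \<sigma>'w2 I3[OF xgt] I4[OF xgt] unfolding x_def
      by (simp add: is_descent_def w_def)
    have D': "{v\<in>dg lam. is_descent lam \<sigma>' v} = S \<union> W"
      using d1 d2 unfolding S' W_def by (auto simp: is_descent_def)
    have D: "{v\<in>dg lam. is_descent lam \<sigma> v} = S \<union> {u}"
      using d1 d2 assms(4) unfolding S_def W_def by (auto simp: is_descent_def)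
    show "int (maj lam (Phi u \<sigma>)) = int (maj lam \<sigma>) - 1"
      unfolding maj_def \<sigma>'_def[symmetric] D D' sumW sumU legs by auto
  qed
qed

end
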